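(* Let $F$ and $V$ be finite-dimensional real vector spaces in duality via a nondegenerate pairing $\langle\cdot,\cdot\rangle$, with $V$ carrying its usual topology, and let $Q$ be a positive semi-definite quadratic form on $F$. Let $\mathcal U_0$ be the family of all open subsets of half-spaces $\{\nu\in V:\langle f,\nu\rangle>a\}$ with $a>0$ and $Q(f)=0$. Let $\mathcal U_1$ be the family of all sets $$\{\nu\in V:\langle f_0,\nu\rangle>a_0,\ \langle f_1,\nu\rangle<a_1,\ \dots,\ \langle f_n,\nu\rangle<a_n\}$$ with $n\ge0$, $f_0,\dots,f_n\in F$, $a_0,\dots,a_n\in\mathbb R$, such that either $0<a_0/\sqrt{Q(f_0)}<a_i/\sqrt{Q(f_i)}$ for all $i=1,\dots,n$, or $a_0<0<a_i$ for all $i=1,\dots,n$. Then $\mathcal U_0\cup\mathcal U_1$ is a basis of the topology of $V$.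
   Context: Division convention: $0/0=0$, $a/0=+\infty$ for $a>0$ and $a/0=-\infty$ for $a<0$. *)

theory Defs
  imports "HOL-Analysis.Analysis"
begin

text \<open>Division with the paper's convention: 0/0 = 0, a/0 = +inf for a > 0, a/0 = -inf for a < 0.\<close>
definition ediv :: "real \<Rightarrow> real \<Rightarrow> ereal" where
  "ediv a b = (if b = 0 then (if a > 0 then \<infinity> else if a < 0 then -\<infinity> else 0)
               else ereal (a / b))"

definition nondegenerate_pairing :: "('f::real_vector \<Rightarrow> 'v::real_vector \<Rightarrow> real) \<Rightarrow> bool" where
  "nondegenerate_pairing p \<longleftrightarrow> bilinear p \<and>
     (\<forall>f. (\<forall>v. p f v = 0) \<longrightarrow> f = 0) \<and> (\<forall>v. (\<forall>f. p f v = 0) \<longrightarrow> v = 0)"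

definition psd_quadratic_form :: "('f::real_vector \<Rightarrow> real) \<Rightarrow> bool" where
  "psd_quadratic_form Q \<longleftrightarrow> (\<exists>B. bilinear B \<and> (\<forall>x. Q x = B x x)) \<and> (\<forall>x. Q x \<ge> 0)"

definition U0 :: "('f::real_vector \<Rightarrow> 'v::topological_space \<Rightarrow> real) \<Rightarrow> ('f \<Rightarrow> real) \<Rightarrow> 'v set set" where
  "U0 p Q = {U. open U \<and> (\<exists>f a. a > 0 \<and> Q f = 0 \<and> U \<subseteq> {v. p f v > a})}"

definition U1 :: "('f::real_vector \<Rightarrow> 'v \<Rightarrow> real) \<Rightarrow> ('f \<Rightarrow> real) \<Rightarrow> 'v set set" where
  "U1 p Q = {{v. p (f 0) v > a 0 \<and> (\<forall>i\<in>{1..n}. p (f i) v < a i)} | (n::nat) (f::nat \<Rightarrow> 'f) (a::nat \<Rightarrow> real).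
      (0 < ediv (a 0) (sqrt (Q (f 0))) \<and>
         (\<forall>i\<in>{1..n}. ediv (a 0) (sqrt (Q (f 0))) < ediv (a i) (sqrt (Q (f i)))))
    \<or> (a 0 < 0 \<and> (\<forall>i\<in>{1..n}. 0 < a i))}"

end

theory Submission
  imports Defs
begin
lemma ratio:
  fixes q t d c Qg Qfg :: real
  assumes "q>0" "t>0" "d>0" "Qg \<ge> 0" "Qfg = q + 2*t*c + t^2*Qg" "Qfg > 0"
    "t*(q*Qg + 2*\<bar>c\<bar>*d) < 2*q*d" "t*d < q"
  shows "(q - t*d)/sqrt q < (q + t*(c+d))/sqrt Qfg"
proof -
  define r where "r = sqrt q"
  have r: "r > 0" "r*r = q" using assms by (auto simp: r_def)
  define h where "h = 2*t*c + t^2*Qg"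
  have "sqrt Qfg \<le> r + h/(2*r)"
  proof -
    have eq: "(r + h/(2*r))^2 = r*r + h + (h/(2*r))^2" using r(1)
      by (simp add: power2_eq_square field_simps)
    have "Qfg \<le> (r + h/(2*r))^2" unfolding eq using r assms unfolding h_def
      by (simp add: power2_eq_square)
    moreover have "r + h/(2*r) \<ge> 0"
    proof (rule ccontr)
      assume "\<not> ?thesis" then have "h < -2*r*r" using r by (simp add: field_simps)
      then show False using assms r h_def by simp
    qed
    ultimately show ?thesis using real_sqrt_le_mono[of Qfg "(r + h/(2*r))^2"] by simp
  qed
  have key: "(q - t*d)*(2*q + h) < 2*q*(q + t*(c+d))"
  proof -
    have e: "2*q*(q + t*(c+d)) - (q - t*d)*(2*q + h) = t*(4*q*d - t*(q*Qg) + 2*t*c*d + t*t*d*Qg)"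
      unfolding h_def by (simp add: power2_eq_square algebra_simps)
    have td: "t*d \<ge> 0" using assms by simp
    have "-c*(t*d) \<le> \<bar>c\<bar>*(t*d)" by (rule mult_right_mono[OF _ td]) simp
    then have "t*(q*Qg) - 2*t*c*d \<le> t*(q*Qg + 2*\<bar>c\<bar>*d)"
      by (simp add: algebra_simps)
    moreover have "t*t*d*Qg \<ge> 0" using assms by simp
    moreover have "q*d > 0" using assms by simp
    ultimately have X: "4*q*d - t*(q*Qg) + 2*t*c*d + t*t*d*Qg > 0" using assms by linarith
    have "t*(4*q*d - t*(q*Qg) + 2*t*c*d + t*t*d*Qg) > 0" using X assms by simp
    then show ?thesis using e by linarith
  qed
  have "(q - t*d)* sqrt Qfg \<le> (q - t*d)*(r + h/(2*r))"
    using \<open>sqrt Qfg \<le> _\<close> assms by (intro mult_left_mono) auto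
  also have "\<dots> = (q - t*d)*(2*q + h)/(2*r)" using r(1) unfolding r(2)[symmetric] by (simp add: field_simps)
  also have "\<dots> < 2*q*(q + t*(c+d))/(2*r)" using key r(1) by (intro divide_strict_right_mono) auto
  also have "\<dots> = (q + t*(c+d)) * r" using r(1) unfolding r(2)[symmetric] by (simp add: field_simps)
  finally have "(q - t*d)* sqrt Qfg < (q + t*(c+d)) * r" .
  moreover have "sqrt Qfg > 0" using assms by simp
  ultimately show ?thesis using r(1) unfolding r_def by (simp add: divide_simps mult.commute)
qed
lemma cs_zero:
  fixes b c :: real
  assumes "\<And>t. 0 \<le> 2*t*b + t^2*c" "c \<ge> 0"
  shows "b = 0"
proof -
  define u where "u = c + 1"
  have u: "u > 0" using assms(2) by (simp add: u_def)
  define t where "t = -b/u"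
  have tu: "t*u = -b" using u by (simp add: t_def)
  have "0 \<le> 2*t*b + t^2*c" by (rule assms(1))
  then have "0 \<le> u*u*(2*t*b + t^2*c)" using u by simp
  also have "u*u*(2*t*b + t^2*c) = 2*(t*u)*b*u + (t*u)*(t*u)*c"
    by (simp add: algebra_simps power2_eq_square)
  also have "\<dots> = b*b*c - 2*b*b*u" unfolding tu by (simp add: algebra_simps)
  finally have "b*b*(c+2) \<le> 0" by (simp add: u_def algebra_simps)
  then have "b*b \<le> 0" using assms(2) by (simp add: mult_le_0_iff)
  then show ?thesis by (auto simp: mult_le_0_iff)
qed

lemma lin_r: "bilinear p \<Longrightarrow> linear (\<lambda>v. p f v)" by (simp add: bilinear_def)
lemma lin_l: "bilinear p \<Longrightarrow> linear (\<lambda>f. p f v)" by (simp add: bilinear_def)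

lemma cont_p:
  fixes p :: "'f::real_vector \<Rightarrow> 'v::euclidean_space \<Rightarrow> real"
  assumes "bilinear p" shows "continuous_on UNIV (\<lambda>v. p f v)"
  using lin_r[OF assms] by (intro linear_continuous_on) (simp add: linear_conv_bounded_linear)

lemma lin_expand:
  fixes \<phi> :: "'f::euclidean_space \<Rightarrow> real"
  assumes "linear \<phi>"
  shows "\<phi> g = g \<bullet> (\<Sum>b\<in>Basis. \<phi> b *\<^sub>R b)"
proof -
  have "\<phi> g = \<phi> (\<Sum>b\<in>Basis. (g \<bullet> b) *\<^sub>R b)" by (simp add: euclidean_representation)
  also have "\<dots> = (\<Sum>b\<in>Basis. (g \<bullet> b) * \<phi> b)"
    by (simp add: linear_sum[OF assms] linear_scale[OF assms])
  also have "\<dots> = g \<bullet> (\<Sum>b\<in>Basis. \<phi> b *\<^sub>R b)"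
    by (simp add: inner_sum_right mult.commute)
  finally show ?thesis .
qed

lemma list_iff:
  fixes L :: "'a list"
  shows "(\<forall>i\<in>{1..length L}. P (L!(i-1))) \<longleftrightarrow> (\<forall>g\<in>set L. P g)"
proof
  assume H: "\<forall>i\<in>{1..length L}. P (L!(i-1))"
  show "\<forall>g\<in>set L. P g"
  proof
    fix g assume "g \<in> set L"
    then obtain j where j: "j < length L" "g = L!j" by (auto simp: in_set_conv_nth)
    then have "Suc j \<in> {1..length L}" by auto
    with H j show "P g" by fastforce
  qed
next
  assume H: "\<forall>g\<in>set L. P g"
  show "\<forall>i\<in>{1..length L}. P (L!(i-1))"
  proof
    fix i assume "i \<in> {1..length L}"
    then have "i - 1 < length L" by auto
    then have "L!(i-1) \<in> set L" by simp
    with H show "P (L!(i-1))" by blast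
  qed
qed

lemma U1_list:
  fixes L :: "'f::real_vector list" and p :: "'f \<Rightarrow> 'v \<Rightarrow> real"
  assumes "(0 < ediv a0 (sqrt (Q f0)) \<and> (\<forall>g\<in>set L. ediv a0 (sqrt (Q f0)) < ediv (c g) (sqrt (Q (h g)))))
           \<or> (a0 < 0 \<and> (\<forall>g\<in>set L. 0 < c g))"
  shows "{v. p f0 v > a0 \<and> (\<forall>g\<in>set L. p (h g) v < c g)} \<in> U1 p Q"
proof -
  define n where "n = length L"
  define f where "f = (\<lambda>i. if i = 0 then f0 else h (L!(i-1)))"
  define a where "a = (\<lambda>i. if i = 0 then a0 else c (L!(i-1)))"
  have fi: "f i = h (L!(i-1))" "a i = c (L!(i-1))" if "i \<in> {1..n}" for i
    using that by (auto simp: f_def a_def)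
  have "{v. p f0 v > a0 \<and> (\<forall>g\<in>set L. p (h g) v < c g)}
      = {v. p (f 0) v > a 0 \<and> (\<forall>i\<in>{1..n}. p (f i) v < a i)}"
  proof -
    have "(\<forall>g\<in>set L. p (h g) v < c g) \<longleftrightarrow> (\<forall>i\<in>{1..n}. p (f i) v < a i)" for v
      using list_iff[where P="\<lambda>g. p (h g) v < c g" and L=L] fi unfolding n_def by auto
    then show ?thesis by (auto simp: f_def a_def)
  qed
  moreover have "(0 < ediv (a 0) (sqrt (Q (f 0))) \<and>
         (\<forall>i\<in>{1..n}. ediv (a 0) (sqrt (Q (f 0))) < ediv (a i) (sqrt (Q (f i)))))
    \<or> (a 0 < 0 \<and> (\<forall>i\<in>{1..n}. 0 < a i))"
    using assms list_iff[where P="\<lambda>g. ediv a0 (sqrt (Q f0)) < ediv (c g) (sqrt (Q (h g)))" and L=L]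
      list_iff[where P="\<lambda>g. 0 < c g" and L=L] fi unfolding n_def by (auto simp: f_def a_def)
  ultimately show ?thesis unfolding U1_def by blast
qed

theorem mainTheorem9:
  fixes p :: "'f::euclidean_space \<Rightarrow> 'v::euclidean_space \<Rightarrow> real"
    and Q :: "'f \<Rightarrow> real"
  assumes "nondegenerate_pairing p"
    and "psd_quadratic_form Q"
  shows "topological_basis (U0 p Q \<union> U1 p Q)"
proof -
  have bp: "bilinear p" and nv: "\<And>v. (\<forall>f. p f v = 0) \<Longrightarrow> v = 0"
    using assms(1) unfolding nondegenerate_pairing_def by auto
  obtain B where bB: "bilinear B" and QB: "\<And>x. Q x = B x x" and Qnn: "\<And>x. Q x \<ge> 0"
    using assms(2) unfolding psd_quadratic_form_def by auto
  define Bs where "Bs = (\<lambda>f g. (B f g + B g f)/2)"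
  have Bs_sym: "Bs f g = Bs g f" for f g by (simp add: Bs_def)
  have lBs: "linear (\<lambda>g. Bs f g)" for f
    by (rule linearI) (simp_all add: Bs_def bilinear_ladd[OF bB] bilinear_radd[OF bB]
        bilinear_lmul[OF bB] bilinear_rmul[OF bB] field_simps)
  have QBs: "Q x = Bs x x" for x by (simp add: Bs_def QB)
  have Qexp: "Q (f0 + t *\<^sub>R g) = Q f0 + 2*t*Bs f0 g + t^2 * Q g" for f0 g t
    unfolding QB by (simp add: bilinear_ladd[OF bB] bilinear_radd[OF bB]
        bilinear_lmul[OF bB] bilinear_rmul[OF bB] Bs_def algebra_simps power2_eq_square)
  have Qneg: "Q (-g) = Q g" for g unfolding QB by (simp add: bilinear_lneg[OF bB] bilinear_rneg[OF bB])
  have pneg: "p (-g) v = - p g v" for g v by (simp add: bilinear_lneg[OF bp])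
  have padd: "p (f + t *\<^sub>R g) v = p f v + t * p g v" for f g t v
    by (simp add: bilinear_ladd[OF bp] bilinear_lmul[OF bp])
  have pdiff: "p g (v - x) = p g v - p g x" for g v x
    by (simp add: bilinear_rsub[OF bp])
  have p0: "p 0 v = 0" for v by (simp add: bilinear_lzero[OF bp])
  have cont: "continuous_on UNIV (\<lambda>v. p f v)" for f using cont_p[OF bp] .
  have opens: "open U" if UU: "U \<in> U0 p Q \<union> U1 p Q" for U
  proof (cases "U \<in> U0 p Q")
    case True then show ?thesis by (simp add: U0_def)
  next
    case False
    obtain n f a where U: "U = {v. p (f 0) v > a 0 \<and> (\<forall>i\<in>{1..n::nat}. p (f i) v < a i)}"
    proof -
      have "U \<in> U1 p Q" using UU False by blast
      then show ?thesis using that unfolding U1_def by blast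
    qed
    have "U = {v. a 0 < p (f 0) v} \<inter> (\<Inter>i\<in>{1..n}. {v. p (f i) v < a i})" unfolding U by auto
    moreover have "open {v. a 0 < p (f 0) v}"
      by (rule open_Collect_less) (auto intro: cont continuous_on_const)
    moreover have "open (\<Inter>i\<in>{1..n}. {v. p (f i) v < a i})"
      by (rule open_INT) (auto intro!: open_Collect_less cont continuous_on_const)
    ultimately show ?thesis by auto
  qed
  obtain Ls where Ls: "set Ls = Basis \<union> uminus ` (Basis :: 'f set)"
    using finite_list[of "Basis \<union> uminus ` (Basis :: 'f set)"] by auto
  show ?thesis
  proof (subst topological_basis_iff[OF opens], safe)
    fix O' :: "'v set" and x assume O': "open O'" "x \<in> O'"
    have NB: "\<exists>\<delta>>0. \<forall>v. (\<forall>b\<in>Basis. \<bar>p b v - p b x\<bar> < \<delta>) \<longrightarrow> v \<in> O'"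
    proof -
      obtain e where e: "e > 0" "ball x e \<subseteq> O'" using O' open_contains_ball by blast
      define Lm where "Lm = (\<lambda>v. \<Sum>b\<in>(Basis::'f set). p b v *\<^sub>R b)"
      have linLm: "linear Lm" unfolding Lm_def
        by (rule linearI) (simp_all add: bilinear_radd[OF bp] bilinear_rmul[OF bp] scaleR_add_left
            sum.distrib scaleR_sum_right)
      have "inj Lm"
        unfolding linear_injective_0[OF linLm]
      proof (intro allI impI)
        fix v assume L0: "Lm v = 0"
        have "p g v = 0" for g
          using lin_expand[OF lin_l[OF bp], of g v] L0 unfolding Lm_def by simp
        then show "v = 0" using nv by blast
      qed
      obtain C where C: "C > 0" "\<And>v. C * norm v \<le> norm (Lm v)"
        using linear_inj_bounded_below_pos[OF linLm \<open>inj Lm\<close>] by blast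
      define \<delta> where "\<delta> = e*C / real DIM('f)"
      show ?thesis
      proof (intro exI[of _ \<delta>] conjI allI impI)
        show "\<delta> > 0" using e C by (simp add: \<delta>_def)
        fix v assume H: "\<forall>b\<in>Basis. \<bar>p b v - p b x\<bar> < \<delta>"
        have "C * norm (v - x) \<le> norm (Lm (v - x))" by (rule C(2))
        also have "\<dots> \<le> (\<Sum>b\<in>Basis. norm (p b (v - x) *\<^sub>R b))" unfolding Lm_def by (rule norm_sum)
        also have "\<dots> = (\<Sum>b\<in>Basis. \<bar>p b v - p b x\<bar>)" by (intro sum.cong) (auto simp: pdiff)
        also have "\<dots> < (\<Sum>b\<in>(Basis::'f set). \<delta>)" by (rule sum_strict_mono) (use H in auto)
        also have "\<dots> = e*C" by (simp add: \<delta>_def)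
        finally have "C * norm (v - x) < C * e" by (simp add: mult.commute)
        then have "norm (v - x) < e" using C(1) by simp
        then show "v \<in> O'" using e by (auto simp: dist_norm norm_minus_commute)
      qed
    qed
    then obtain \<delta> where dpos: "\<delta> > 0" and dO: "\<And>v. (\<forall>b\<in>Basis. \<bar>p b v - p b x\<bar> < \<delta>) \<Longrightarrow> v \<in> O'"
      by auto
    show "\<exists>B'\<in>U0 p Q \<union> U1 p Q. x \<in> B' \<and> B' \<subseteq> O'"
    proof (cases "x = 0")
      case True
      define S where "S = {v. p 0 v > -1 \<and> (\<forall>g\<in>set Ls. p (id g) v < (\<lambda>_. \<delta>) g)}"
      have "S \<in> U1 p Q" unfolding S_def by (rule U1_list) (use dpos in auto)
      moreover have "x \<in> S" using True dpos by (simp add: S_def p0 bilinear_rzero[OF bp])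
      moreover have "S \<subseteq> O'"
      proof
        fix v assume v: "v \<in> S"
        have "\<bar>p b v - p b x\<bar> < \<delta>" if b: "b \<in> Basis" for b
        proof -
          have "p b v < \<delta>" "p (-b) v < \<delta>" using v b Ls by (auto simp: S_def)
          then show ?thesis using True by (simp add: pneg bilinear_rzero[OF bp])
        qed
        then show "v \<in> O'" using dO by blast
      qed
      ultimately show ?thesis by blast
    next
      case xnz: False
      show ?thesis
      proof (cases "\<exists>f. Q f = 0 \<and> p f x \<noteq> 0")
        case True
        then obtain f where f: "Q f = 0" "p f x > 0"
          by (metis Qneg neg_0_less_iff_less not_less_iff_gr_or_eq pneg)
        define S where "S = O' \<inter> {v. p f v > p f x / 2}"
        have "open S" unfolding S_def
          by (intro open_Int O' open_Collect_less cont continuous_on_const)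
        then have "S \<in> U0 p Q" unfolding U0_def S_def using f
          by (intro CollectI conjI exI[of _ f] exI[of _ "p f x / 2"]) auto
        moreover have "x \<in> S" using O' f by (simp add: S_def)
        moreover have "S \<subseteq> O'" by (simp add: S_def)
        ultimately show ?thesis by blast
      next
        case False
        then have ann: "\<And>f. Q f = 0 \<Longrightarrow> p f x = 0" by blast
        have "\<exists>f0. \<forall>g. p g x = Bs f0 g"
        proof -
          define w where "w = (\<Sum>b\<in>(Basis::'f set). p b x *\<^sub>R b)"
          define Psi where "Psi = (\<lambda>f. \<Sum>b\<in>(Basis::'f set). Bs f b *\<^sub>R b)"
          have pw: "p g x = g \<bullet> w" for g unfolding w_def using lin_expand[OF lin_l[OF bp], of g x] by simp
          have Bpsi: "Bs f g = g \<bullet> Psi f" for f g unfolding Psi_def using lin_expand[OF lBs, of f g] by simp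
          have Badd: "Bs (f1 + f2) g = Bs f1 g + Bs f2 g" for f1 f2 g
            unfolding Bs_def bilinear_ladd[OF bB] bilinear_radd[OF bB] by (simp add: add_divide_distrib algebra_simps)
          have Bmul: "Bs (c *\<^sub>R f) g = c * Bs f g" for c f g
            unfolding Bs_def bilinear_lmul[OF bB] bilinear_rmul[OF bB] by (simp add: algebra_simps)
          have linPsi: "linear Psi" unfolding Psi_def
            by (rule linearI) (simp_all add: Badd Bmul scaleR_add_left sum.distrib scaleR_sum_right)
          have subS: "subspace (range Psi)" by (rule linear_subspace_image[OF linPsi subspace_UNIV])
          then have spS: "span (range Psi) = range Psi" by simp
          obtain y z where y: "y \<in> span (range Psi)" and z: "\<And>u. u \<in> span (range Psi) \<Longrightarrow> orthogonal z u"
            and wyz: "w = y + z"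
            using orthogonal_subspace_decomp_exists by blast
          from y spS obtain f0 where yf0: "y = Psi f0" by auto
          have zPsi: "z \<bullet> Psi f = 0" for f using z[of "Psi f"] span_base[of "Psi f" "range Psi"]
            by (auto simp: orthogonal_def)
          have "Q z = 0" using zPsi[of z] Bpsi[of z z] QBs[of z] by (simp add: inner_commute)
          then have "p z x = 0" by (rule ann)
          then have "z \<bullet> y + z \<bullet> z = 0" using pw[of z] wyz by (simp add: inner_add_right)
          moreover have "z \<bullet> y = 0" using z[OF y] by (simp add: orthogonal_def)
          ultimately have "z = 0" by simp
          then have "w = Psi f0" using wyz yf0 by simp
          then have "\<forall>g. p g x = Bs f0 g" using pw Bpsi by simp
          then show ?thesis by blast
        qed
        then obtain f0 where f0: "\<And>g. p g x = Bs f0 g" by blast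
        define q where "q = Q f0"
        have pq: "p f0 x = q" by (simp add: f0 q_def QBs)
        have qpos: "q > 0"
        proof (rule ccontr)
          assume "\<not> q > 0"
          then have q0: "q = 0" using Qnn[of f0] q_def by simp
          have "Bs f0 g = 0" for g
          proof (rule cs_zero)
            show "0 \<le> 2*t*Bs f0 g + t^2 * Q g" for t using Qnn[of "f0 + t *\<^sub>R g"] Qexp[of f0 t g] q0 q_def by simp
            show "Q g \<ge> 0" by (rule Qnn)
          qed
          then have "p g x = 0" for g using f0 by simp
          then show False using nv xnz by blast
        qed
        define d where "d = \<delta>/2"
        have dpos: "d > 0" using dpos by (simp add: d_def)
        define M where "M = (\<Sum>b\<in>(Basis::'f set). \<bar>p b x\<bar> + Q b)"
        have Mb: "\<bar>p g x\<bar> \<le> M \<and> Q g \<le> M" if "g \<in> set Ls" for g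
        proof -
          from that Ls obtain b where b: "b \<in> Basis" "g = b \<or> g = -b" by auto
          have "\<bar>p b x\<bar> + Q b \<le> M" unfolding M_def by (rule member_le_sum) (use b Qnn in auto)
          then show ?thesis using b Qnn[of b] by (auto simp: pneg Qneg)
        qed
        have M0: "M \<ge> 0" unfolding M_def by (intro sum_nonneg) (simp add: Qnn add_nonneg_nonneg)
        define s where "s = min (q/(2*(d+M+1))) (q*d/(q*M + 2*M*d + 1))"
        have qM0: "q*M \<ge> 0" "M*d \<ge> 0" using qpos dpos M0 by simp_all
        have K0: "q*M + 2*M*d + 1 > 0" using qM0 by linarith
        have spos: "s > 0" using qpos dpos M0 K0 by (simp add: s_def)
        have den: "2*(d+M+1) > 0" using M0 dpos by simp
        have "s \<le> q/(2*(d+M+1))" unfolding s_def by simp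
        then have sa: "s*(2*(d+M+1)) \<le> q" using den by (simp add: le_divide_eq)
        have "s \<le> q*d/(q*M + 2*M*d + 1)" unfolding s_def by simp
        then have sb: "s*(q*M + 2*M*d + 1) \<le> q*d" using K0 by (simp add: le_divide_eq)
        have "d < 2*(d+M+1)" "M < 2*(d+M+1)" using M0 dpos by simp_all
        then have "s*d < s*(2*(d+M+1))" "s*M < s*(2*(d+M+1))" using spos by simp_all
        then have s1: "s*d < q" and s2: "s*M < q" using sa by linarith+
        define S where "S = {v. p f0 v > q - s*d \<and> (\<forall>g\<in>set Ls. p (f0 + s *\<^sub>R g) v < q + s*(p g x + d))}"
        have sq: "sqrt q > 0" using qpos by simp
        have e0: "ediv (q - s*d) (sqrt (Q f0)) = ereal ((q - s*d)/sqrt q)" using sq by (simp add: ediv_def q_def)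
        have cond: "(0 < ediv (q - s*d) (sqrt (Q f0)) \<and>
            (\<forall>g\<in>set Ls. ediv (q - s*d) (sqrt (Q f0)) < ediv (q + s*(p g x + d)) (sqrt (Q (f0 + s *\<^sub>R g)))))
          \<or> (q - s*d < 0 \<and> (\<forall>g\<in>set Ls. 0 < q + s*(p g x + d)))"
        proof (rule disjI1, intro conjI ballI)
          show "0 < ediv (q - s*d) (sqrt (Q f0))" using e0 s1 sq by simp
          fix g assume g: "g \<in> set Ls"
          have Mg: "\<bar>p g x\<bar> \<le> M" "Q g \<le> M" using Mb[OF g] by auto
          have Qg: "Q (f0 + s *\<^sub>R g) = q + 2* s*p g x + s^2 * Q g" using Qexp[of f0 s g] f0[of g] q_def by simp
          have "- M \<le> p g x" using Mg(1) by linarith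
          then have "s*(-M) \<le> s*p g x" using spos by (intro mult_left_mono) auto
          moreover have "s*d > 0" using spos dpos by simp
          ultimately have apos: "q + s*(p g x + d) > 0" using s2 by (simp add: distrib_left)
          show "ediv (q - s*d) (sqrt (Q f0)) < ediv (q + s*(p g x + d)) (sqrt (Q (f0 + s *\<^sub>R g)))"
          proof (cases "Q (f0 + s *\<^sub>R g) = 0")
            case True then show ?thesis using apos e0 by (simp add: ediv_def)
          next
            case False
            then have Qp: "Q (f0 + s *\<^sub>R g) > 0" using Qnn[of "f0 + s *\<^sub>R g"] by simp
            have m1: "q * Q g \<le> q * M" using Mg qpos by simp
            have m2: "\<bar>p g x\<bar> * d \<le> M * d" using Mg dpos by (simp add: mult_right_mono)
            have "s*(q * Q g + 2*\<bar>p g x\<bar>*d) \<le> s*(q*M + 2*M*d)"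
              using m1 m2 spos by (intro mult_left_mono) auto
            also have "\<dots> < s*(q*M + 2*M*d + 1)" using spos by simp
            also have "\<dots> \<le> q*d" by (rule sb)
            also have "\<dots> < 2*q*d" using qpos dpos by simp
            finally have c7: "s*(q * Q g + 2*\<bar>p g x\<bar>*d) < 2*q*d" .
            have "(q - s*d)/sqrt q < (q + s*(p g x + d))/sqrt (Q (f0 + s *\<^sub>R g))"
              by (rule ratio[OF qpos spos dpos Qnn Qg Qp c7 s1])
            then show ?thesis using e0 False by (simp add: ediv_def)
          qed
        qed
        have "S \<in> U1 p Q" unfolding S_def by (rule U1_list[OF cond])
        moreover have "x \<in> S" using spos dpos s1 unfolding S_def by (simp add: padd pq)
        moreover have "S \<subseteq> O'"
        proof
          fix v assume v: "v \<in> S"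
          have "\<bar>p b v - p b x\<bar> < \<delta>" if b: "b \<in> Basis" for b
          proof -
            have v0: "p f0 v > q - s*d" using v by (simp add: S_def)
            have vS: "\<forall>g\<in>set Ls. p (f0 + s *\<^sub>R g) v < q + s*(p g x + d)" using v by (simp add: S_def)
            have bL: "b \<in> set Ls" "-b \<in> set Ls" using b Ls by auto
            have j1: "p (f0 + s *\<^sub>R b) v < q + s*(p b x + d)" using bspec[OF vS bL(1)] .
            have j2: "p (f0 + s *\<^sub>R (-b)) v < q + s*(p (-b) x + d)" using bspec[OF vS bL(2)] .
            have i1: "p f0 v + s * p b v < q + s*(p b x + d)" using j1 by (simp only: padd)
            have i2: "p f0 v - s * p b v < q + s*(- p b x + d)" using j2 by (simp only: padd pneg)
            have "s*(p b v - p b x) < s*(2*d)" using i1 v0 by (simp add: algebra_simps)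
            then have "p b v - p b x < 2*d" using spos by simp
            moreover have "s*(p b x - p b v) < s*(2*d)" using i2 v0 by (simp add: algebra_simps)
            then have "p b x - p b v < 2*d" using spos by simp
            ultimately show ?thesis by (simp add: d_def abs_less_iff)
          qed
          then show "v \<in> O'" using dO by blast
        qed
        ultimately show ?thesis by blast
      qed
    qed
  qed
qed

end
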